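(* For $n\ge1$ and $0\le k\le n-1$, the number of plane trees with $n$ edges and exactly $k$ young leaves is $$\binom{n-1}{k}M_{n-k-1},$$ where $M_m=\sum_{r=0}^{\lfloor m/2\rfloor}\binom{m}{2r}C_r$ is the $m$-th Motzkin number and $C_r=\frac{1}{r+1}\binom{2r}{r}$ is the $r$-th Catalan number.
   Context: A plane tree is a rooted tree in which the children of each vertex are linearly ordered (left to right). A leaf is a vertex with no children; by convention the tree consisting of a single vertex (no edges) has no leaves. A leaf is an old leaf if it is the leftmost child of its parent, and a young leaf otherwise. The Motzkin number $M_m$ equals the number of lattice paths from $(0,0)$ to $(m,0)$ with steps $(1,1),(1,-1),(1,0)$ never going below the $x$-axis. *)

theory Defs
  imports Main
begin

datatype ptree = Node "ptree list"

fun edges :: "ptree \<Rightarrow> nat" where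
  "edges (Node ts) = (\<Sum>t\<leftarrow>ts. Suc (edges t))"

fun is_leaf :: "ptree \<Rightarrow> bool" where
  "is_leaf (Node ts) = (ts = [])"

text \<open>Number of young leaves: children that are leaves and are not the leftmost
  child of their parent (i.e. sit at position >= 1 in the children list).\<close>
fun young_leaves :: "ptree \<Rightarrow> nat" where
  "young_leaves (Node ts) =
     length (filter is_leaf (drop 1 ts)) + (\<Sum>t\<leftarrow>ts. young_leaves t)"

definition catalan :: "nat \<Rightarrow> nat" where
  "catalan r = ((2 * r) choose r) div (r + 1)"

definition motzkin :: "nat \<Rightarrow> nat" where
  "motzkin m = (\<Sum>r = 0..m div 2. (m choose (2 * r)) * catalan r)"

end

theory Submission
  imports Defs
begin


fun Dp :: "nat \<Rightarrow> nat \<Rightarrow> nat" where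
  "Dp 0 h = (if h = 0 then 1 else 0)"
| "Dp (Suc p) h = (if h = 0 then 0 else Dp p (h - 1)) + Dp p (Suc h)"

lemma Dp_big: "p < h \<Longrightarrow> Dp p h = 0"
  by (induction p arbitrary: h) auto

lemma Dp_odd: "odd (p + h) \<Longrightarrow> Dp p h = 0"
  by (induction p arbitrary: h) (auto simp: odd_pos)

lemma Dp_closed:
  "p = 2 * b + h \<Longrightarrow> int (Dp p h) = int (p choose b) - (if b = 0 then 0 else int (p choose (b - 1)))"
proof (induction p arbitrary: b h)
  case 0
  then show ?case by simp
next
  case (Suc p)
  show ?case
  proof (cases h)
    case 0
    then obtain s where b: "b = Suc s" using Suc.prems by (cases b) auto
    have p: "p = 2 * s + 1" using Suc.prems 0 b by simp
    have IH: "int (Dp p 1) = int (p choose s) - (if s = 0 then 0 else int (p choose (s - 1)))"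
      using Suc.IH[of s 1] p by simp
    have sym: "p choose Suc s = p choose s"
      using binomial_symmetric[of s p] p by (simp add: Suc_diff_le)
    show ?thesis
    proof (cases s)
      case 0
      then show ?thesis using IH sym b \<open>h = 0\<close> by simp
    next
      case (Suc s')
      then show ?thesis using IH sym b \<open>h = 0\<close> by simp
    qed
  next
    case (Suc h')
    have IH1: "int (Dp p h') = int (p choose b) - (if b = 0 then 0 else int (p choose (b - 1)))"
      using Suc.IH[of b h'] Suc.prems Suc by simp
    show ?thesis
    proof (cases b)
      case 0
      then have "Dp p (Suc h) = 0" using Suc.prems Dp_big by simp
      then show ?thesis using IH1 0 Suc by simp
    next
      case (Suc b')
      have IH2: "int (Dp p (Suc h)) = int (p choose b') - (if b' = 0 then 0 else int (p choose (b' - 1)))"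
        using Suc.IH[of b' "Suc h"] Suc.prems Suc by simp
      show ?thesis
      proof (cases b')
        case 0
        then show ?thesis using IH1 IH2 Suc \<open>h = Suc h'\<close> by simp
      next
        case (Suc b'')
        then show ?thesis using IH1 IH2 \<open>b = Suc b'\<close> \<open>h = Suc h'\<close> by simp
      qed
    qed
  qed
qed

lemma Dp_catalan: "Dp (2 * r) 0 = catalan r"
proof -
  have c: "int (Dp (2*r) 0) = int ((2*r) choose r) - (if r = 0 then 0 else int ((2*r) choose (r - 1)))"
    using Dp_closed[of "2*r" r 0] by simp
  have "(r + 1) * Dp (2*r) 0 = (2*r) choose r"
  proof (cases r)
    case 0
    then show ?thesis by simp
  next
    case (Suc s)
    define X where "X = Dp (2*r) 0"
    define A where "A = (2*r) choose r"
    define B where "B = (2*r) choose s"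
    have c': "int X = int A - int B" using c Suc unfolding X_def A_def B_def by simp
    have a0: "Suc s * ((2*r) choose Suc s) = ((2*r) - s) * ((2*r) choose s)"
      using binomial_absorption[of s "2*r"] binomial_absorb_comp[of "2*r" s] by simp
    have a: "r * A = (s + 2) * B" using a0 Suc unfolding A_def B_def by simp
    have a': "int r * int A = (int s + 2) * int B" using arg_cong[OF a, of int] by (simp add: algebra_simps)
    have "int ((r+1) * X) = (int s + 2) * int X"
      using Suc by (simp add: algebra_simps)
    also have "\<dots> = (int s + 2) * (int A - int B)" by (simp only: c')
    also have "\<dots> = int A" using a' Suc by (simp add: algebra_simps)
    finally have "int ((r+1) * X) = int A" .
    then show ?thesis unfolding X_def A_def by linarith
  qed
  then show ?thesis unfolding catalan_def
    by (metis add.commute div_mult_self1_is_m zero_less_Suc plus_1_eq_Suc mult.commute)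
qed

definition Rm :: "nat \<Rightarrow> nat \<Rightarrow> nat" where
  "Rm L h = (\<Sum>p\<le>L. (L choose p) * Dp p h)"

lemma Rm_0: "Rm 0 h = (if h = 0 then 1 else 0)"
  by (simp add: Rm_def)

lemma Rm_Suc: "Rm (Suc L) h = (if h = 0 then 0 else Rm L (h - 1)) + Rm L (Suc h) + Rm L h"
proof -
  have 1: "Rm (Suc L) h = Dp 0 h + (\<Sum>q\<le>L. (Suc L choose Suc q) * Dp (Suc q) h)"
    unfolding Rm_def by (subst sum.atMost_Suc_shift) simp
  have 2: "(\<Sum>q\<le>L. (Suc L choose Suc q) * Dp (Suc q) h) = (\<Sum>q\<le>L. (L choose q) * Dp (Suc q) h) + (\<Sum>q\<le>L. (L choose Suc q) * Dp (Suc q) h)"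
    by (simp only: binomial_Suc_Suc add_mult_distrib sum.distrib)
  have 3: "Dp 0 h + (\<Sum>q\<le>L. (L choose Suc q) * Dp (Suc q) h) = (\<Sum>p\<le>Suc L. (L choose p) * Dp p h)"
    by (subst sum.atMost_Suc_shift) simp
  have 4: "(\<Sum>p\<le>Suc L. (L choose p) * Dp p h) = Rm L h" unfolding Rm_def by simp
  have 5: "(\<Sum>q\<le>L. (L choose q) * Dp (Suc q) h) = (if h = 0 then 0 else Rm L (h - 1)) + Rm L (Suc h)"
    unfolding Rm_def by (simp add: algebra_simps sum.distrib sum_distrib_left)
  show ?thesis using 1 2 3 4 5 by simp
qed

lemma Rm_motzkin: "Rm m 0 = motzkin m"
proof -
  have "Rm m 0 = (\<Sum>p\<in>(\<lambda>r. 2 * r) ` {0..m div 2}. (m choose p) * Dp p 0)"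
    unfolding Rm_def
  proof (rule sum.mono_neutral_right)
    show "\<forall>i\<in>{..m} - (*) 2 ` {0..m div 2}. (m choose i) * Dp i 0 = 0"
    proof
      fix i assume i: "i \<in> {..m} - (*) 2 ` {0..m div 2}"
      have "odd i"
      proof
        assume "even i"
        then have "i = 2 * (i div 2)" by simp
        moreover have "i div 2 \<in> {0..m div 2}" using i by (auto intro: div_le_mono)
        ultimately show False using i by blast
      qed
      then show "(m choose i) * Dp i 0 = 0" by (simp add: Dp_odd)
    qed
  qed auto
  also have "\<dots> = (\<Sum>r = 0..m div 2. (m choose (2 * r)) * Dp (2 * r) 0)"
    by (subst sum.reindex) (auto simp: inj_on_def)
  also have "\<dots> = motzkin m" unfolding motzkin_def by (simp add: Dp_catalan)
  finally show ?thesis .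
qed

fun Q :: "nat \<Rightarrow> nat \<Rightarrow> nat \<Rightarrow> nat" where
  "Q 0 h k = (if h = 0 \<and> k = 0 then 1 else 0)"
| "Q (Suc L) h k = (if h = 0 then 0 else Q L (h - 1) k) + Q L (Suc h) k + Q L h k
     + (if k = 0 then 0 else Q L h (k - 1))"

lemma Q_closed: "Q L h k = (L choose k) * Rm (L - k) h"
proof (induction L arbitrary: h k)
  case 0
  then show ?case by (simp add: Rm_0)
next
  case (Suc L)
  consider "k = 0" | "0 < k" "k \<le> L" | "k = Suc L" | "k > Suc L" by linarith
  then show ?case
  proof cases
    case 1
    then show ?thesis using Suc by (simp add: Rm_Suc algebra_simps)
  next
    case 2
    then obtain j where k: "k = Suc j" by (cases k) auto
    have e: "Suc L - k = Suc (L - k)" "L - j = Suc (L - k)" using 2 k by auto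
    show ?thesis using Suc 2 k by (simp add: e Rm_Suc algebra_simps)
  next
    case 3
    then show ?thesis using Suc by (simp add: Rm_0)
  next
    case 4
    then have "L choose k = 0" "L choose (k - 1) = 0" "Suc L choose k = 0" by auto
    then show ?thesis using Suc 4 by (simp add: binomial_eq_0)
  qed
qed



definition TS :: "nat \<Rightarrow> nat \<Rightarrow> nat \<Rightarrow> ptree list set" where
  "TS h N k = {ts. length ts = Suc h \<and> (\<forall>t\<in>set ts. \<not> is_leaf t)
     \<and> sum_list (map edges ts) = N \<and> sum_list (map young_leaves ts) = k}"

fun kids :: "ptree \<Rightarrow> ptree list" where "kids (Node ts) = ts"

lemma edges_snoc: "edges (Node (cs @ [c])) = edges (Node cs) + Suc (edges c)"
  by simp

lemma yl_snoc: "young_leaves (Node (cs @ [c])) = young_leaves (Node cs) + young_leaves c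
   + (if is_leaf c \<and> cs \<noteq> [] then 1 else 0)"
  by (cases cs) auto

lemma nonleaf_edges: "\<not> is_leaf t \<Longrightarrow> edges t \<ge> 1"
  by (cases t) (auto simp: neq_Nil_conv)

lemma finite_edges_le: "finite {t. edges t \<le> n}"
proof (induction n rule: less_induct)
  case (less n)
  have "{t. edges t \<le> n} \<subseteq> Node ` {ts. set ts \<subseteq> {t. edges t < n} \<and> length ts \<le> n}"
  proof
    fix t assume "t \<in> {t. edges t \<le> n}"
    then obtain ts where t: "t = Node ts" "(\<Sum>c\<leftarrow>ts. Suc (edges c)) \<le> n" by (cases t) auto
    have len: "length ts \<le> (\<Sum>c\<leftarrow>ts. Suc (edges c))"
      by (induction ts) auto
    have "\<forall>c\<in>set ts. Suc (edges c) \<le> (\<Sum>c\<leftarrow>ts. Suc (edges c))"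
      using member_le_sum_list[of _ "map (\<lambda>c. Suc (edges c)) ts"] by auto
    then show "t \<in> Node ` {ts. set ts \<subseteq> {t. edges t < n} \<and> length ts \<le> n}"
      using t len by fastforce
  qed
  moreover have "finite {t. edges t < n}"
  proof (cases n)
    case 0 then show ?thesis by simp
  next
    case (Suc m)
    then have "{t. edges t < n} = {t. edges t \<le> m}" by auto
    then show ?thesis using less Suc by simp
  qed
  then have "finite {ts. set ts \<subseteq> {t. edges t < n} \<and> length ts \<le> n}"
    using finite_lists_length_le by blast
  ultimately show ?case by (meson finite_imageI finite_subset)
qed

lemma finite_TS: "finite (TS h N k)"
proof -
  have "TS h N k \<subseteq> {ts. set ts \<subseteq> {t. edges t \<le> N} \<and> length ts \<le> Suc h}"
    unfolding TS_def using member_le_sum_list[of _ "map edges _"] by fastforce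
  then show ?thesis
    by (rule finite_subset) (rule finite_lists_length_le[OF finite_edges_le])
qed

lemma len_le_edges: "\<forall>t\<in>set ts. \<not> is_leaf t \<Longrightarrow> length ts \<le> sum_list (map edges ts)"
proof (induction ts)
  case (Cons t ts)
  then show ?case using nonleaf_edges[of t] by auto
qed simp

lemma edges0: "edges c = 0 \<Longrightarrow> c = Node []"
  using nonleaf_edges[of c] by (cases c) auto

lemma TS_1: "TS h (Suc 0) k = (if h = 0 \<and> k = 0 then {[Node [Node []]]} else {})"
proof -
  have all: "ts = [Node [Node []]] \<and> h = 0 \<and> k = 0" if "ts \<in> TS h (Suc 0) k" for ts
  proof -
    have a: "length ts = Suc h" "\<forall>t\<in>set ts. \<not> is_leaf t" "sum_list (map edges ts) = 1"
      "sum_list (map young_leaves ts) = k" using that unfolding TS_def by auto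
    then have "h = 0" using len_le_edges[of ts] by simp
    then obtain t where t: "ts = [t]" using a by (auto simp: length_Suc_conv)
    obtain cs where cs: "t = Node cs" by (cases t)
    have "cs \<noteq> []" using a t cs by auto
    then obtain c cs' where "cs = c # cs'" by (cases cs) auto
    moreover have "edges c = 0 \<and> cs' = []" using a t cs \<open>cs = c # cs'\<close> by simp
    ultimately have "cs = [Node []]" using edges0[of c] by simp
    then show ?thesis using a t cs \<open>h = 0\<close> by auto
  qed
  have mem: "[Node [Node []]] \<in> TS 0 (Suc 0) 0" unfolding TS_def by simp
  show ?thesis
  proof (rule set_eqI)
    fix x
    show "x \<in> TS h (Suc 0) k \<longleftrightarrow> x \<in> (if h = 0 \<and> k = 0 then {[Node [Node []]]} else {})"
      using all[of x] mem by auto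
  qed
qed

fun cls :: "ptree \<Rightarrow> nat" where
  "cls (Node cs) = (if length cs = 1 then (if is_leaf (hd cs) then 1 else 2)
      else (if is_leaf (last cs) then 3 else 4))"

lemma butlast2[simp]: "butlast (xs @ [a, c]) = xs @ [a]"
  using butlast_snoc[of "xs @ [a]" c] by simp

lemma last2[simp]: "last (xs @ [a, c]) = c"
  using last_snoc[of "xs @ [a]" c] by simp

lemma card_TS_Suc: "card (TS h (Suc (Suc L)) k) =
   (if h = 0 then 0 else card (TS (h - 1) (Suc L) k)) + card (TS (Suc h) (Suc L) k)
   + card (TS h (Suc L) k) + (if k = 0 then 0 else card (TS h (Suc L) (k - 1)))"
proof -
  define A1 where "A1 = (if h = 0 then {} else TS (h - 1) (Suc L) k)"
  define A2 where "A2 = TS h (Suc L) k"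
  define A3 where "A3 = (if k = 0 then {} else TS h (Suc L) (k - 1))"
  define A4 where "A4 = TS (Suc h) (Suc L) k"
  define f1 where "f1 = (\<lambda>xs. xs @ [Node [Node []]])"
  define f2 where "f2 = (\<lambda>ts. butlast ts @ [Node [last ts]])"
  define f3 where "f3 = (\<lambda>ts. butlast ts @ [Node (kids (last ts) @ [Node []])])"
  define f4 where "f4 = (\<lambda>ts. butlast (butlast ts) @ [Node (kids (last (butlast ts)) @ [last ts])])"
  define S where "S = TS h (Suc (Suc L)) k"
  have TSsnoc: "xs @ [t] \<in> TS h' N k' \<longleftrightarrow> length xs = h' \<and> (\<forall>t\<in>set xs. \<not> is_leaf t) \<and> \<not> is_leaf t
     \<and> sum_list (map edges xs) + edges t = N \<and> sum_list (map young_leaves xs) + young_leaves t = k'"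
    for xs t h' N k' unfolding TS_def by auto
  have snoc: "\<exists>xs t. ts = xs @ [t]" if "ts \<in> TS h' N k'" for ts h' N k'
    using that unfolding TS_def by (cases ts rule: rev_cases) auto
  have kidsnz: "\<not> is_leaf a \<Longrightarrow> kids a \<noteq> []" for a by (cases a) auto
  have nodekids: "Node (kids a) = a" for a by (cases a) auto
  have i1: "f1 x \<in> S \<and> cls (last (f1 x)) = 1" if xA: "x \<in> A1" for x
    using xA unfolding A1_def S_def f1_def TS_def by (auto split: if_splits)
  have i2: "f2 x \<in> S \<and> cls (last (f2 x)) = 2" if xA: "x \<in> A2" for x
  proof -
    obtain xs t where x: "x = xs @ [t]" using snoc[of x] xA unfolding A2_def by blast
    show ?thesis using xA unfolding x A2_def S_def f2_def TSsnoc by (cases t) auto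
  qed
  have i3: "f3 x \<in> S \<and> cls (last (f3 x)) = 3" if xA: "x \<in> A3" for x
  proof -
    have k: "k \<noteq> 0" using xA unfolding A3_def by (cases "k = 0") auto
    have "x \<in> TS h (Suc L) (k - 1)" using xA k unfolding A3_def by simp
    then obtain xs t where x: "x = xs @ [t]" using snoc by blast
    obtain cs where t: "t = Node cs" by (cases t)
    have m: "xs @ [Node cs] \<in> TS h (Suc L) (k - 1)" using \<open>x \<in> TS h (Suc L) (k - 1)\<close> x t by simp
    then have P: "length xs = h" "\<forall>t\<in>set xs. \<not> is_leaf t" "cs \<noteq> []"
      "sum_list (map edges xs) + edges (Node cs) = Suc L"
      "sum_list (map young_leaves xs) + young_leaves (Node cs) = k - 1"
      unfolding TSsnoc by auto
    have e: "edges (Node (cs @ [Node []])) = edges (Node cs) + 1" by simp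
    have y: "young_leaves (Node (cs @ [Node []])) = young_leaves (Node cs) + 1"
      using P(3) by (simp only: yl_snoc) simp
    have f: "f3 x = xs @ [Node (cs @ [Node []])]" unfolding f3_def x t by simp
    have "f3 x \<in> S" unfolding f S_def TSsnoc
      using P k by (simp only: e y) auto
    moreover have "cls (last (f3 x)) = 3" unfolding f using P(3) by simp
    ultimately show ?thesis by blast
  qed
  have i4: "f4 x \<in> S \<and> cls (last (f4 x)) = 4" if xA: "x \<in> A4" for x
  proof -
    have "length x = Suc (Suc h)" using xA unfolding A4_def TS_def by auto
    then obtain xs a c where x: "x = xs @ [a, c]"
      by (cases x rule: rev_cases; cases "butlast x" rule: rev_cases) auto
    obtain cs where a: "a = Node cs" by (cases a)
    have m: "(xs @ [Node cs]) @ [c] \<in> TS (Suc h) (Suc L) k" using xA x a unfolding A4_def by simp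
    then have P: "length xs = h" "\<forall>t\<in>set xs. \<not> is_leaf t" "cs \<noteq> []" "\<not> is_leaf c"
      "sum_list (map edges xs) + edges (Node cs) + edges c = Suc L"
      "sum_list (map young_leaves xs) + young_leaves (Node cs) + young_leaves c = k"
      unfolding TSsnoc by auto
    have e: "edges (Node (cs @ [c])) = edges (Node cs) + edges c + 1" by simp
    have y: "young_leaves (Node (cs @ [c])) = young_leaves (Node cs) + young_leaves c"
      using P(4) by (simp only: yl_snoc) simp
    have f: "f4 x = xs @ [Node (cs @ [c])]" unfolding f4_def x a by simp
    have "f4 x \<in> S" unfolding f S_def TSsnoc
      using P by (simp only: e y) auto
    moreover have "cls (last (f4 x)) = 4" unfolding f using P(3,4) by simp
    ultimately show ?thesis by blast
  qed
  have cover: "S \<subseteq> f1 ` A1 \<union> f2 ` A2 \<union> f3 ` A3 \<union> f4 ` A4"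
  proof
    fix ts assume ts: "ts \<in> S"
    obtain xs t where x: "ts = xs @ [t]" using snoc[of ts] ts unfolding S_def by blast
    obtain cs where t: "t = Node cs" by (cases t)
    have P: "length xs = h" "\<forall>t\<in>set xs. \<not> is_leaf t" "\<not> is_leaf t"
      "sum_list (map edges xs) + edges t = Suc (Suc L)" "sum_list (map young_leaves xs) + young_leaves t = k"
      using ts unfolding S_def x TSsnoc by auto
    have "cs \<noteq> []" using P(3) t by simp
    then obtain ds c where cs: "cs = ds @ [c]" by (cases cs rule: rev_cases) auto
    have e: "edges t = edges (Node ds) + Suc (edges c)" unfolding t cs by (rule edges_snoc)
    have y: "young_leaves t = young_leaves (Node ds) + young_leaves c + (if is_leaf c \<and> ds \<noteq> [] then 1 else 0)"
      unfolding t cs by (rule yl_snoc)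
    show "ts \<in> f1 ` A1 \<union> f2 ` A2 \<union> f3 ` A3 \<union> f4 ` A4"
    proof (cases "ds = []")
      case True
      show ?thesis
      proof (cases "is_leaf c")
        case True
        then have c: "c = Node []" by (cases c) auto
        have e1: "edges t = 1" "young_leaves t = 0" using e y c \<open>ds = []\<close> by simp_all
        have "h \<noteq> 0"
        proof
          assume "h = 0"
          then have "xs = []" using P(1) by simp
          then show False using P(4) e1 by simp
        qed
        then have "xs \<in> A1" using P e1 unfolding A1_def TS_def by auto
        moreover have "ts = f1 xs" unfolding f1_def x t cs c \<open>ds = []\<close> by simp
        ultimately show ?thesis by blast
      next
        case False
        have e1: "edges t = Suc (edges c)" "young_leaves t = young_leaves c" using e y \<open>ds = []\<close> by simp_all
        have "xs @ [c] \<in> A2" using P False e1 unfolding A2_def TSsnoc by auto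
        moreover have "ts = f2 (xs @ [c])" unfolding f2_def x t cs \<open>ds = []\<close> by simp
        ultimately show ?thesis by blast
      qed
    next
      case False
      show ?thesis
      proof (cases "is_leaf c")
        case True
        then have c: "c = Node []" by (cases c) auto
        have e1: "edges t = Suc (edges (Node ds))" "young_leaves t = Suc (young_leaves (Node ds))"
          using e y c False by simp_all
        have k: "k \<noteq> 0" using P(5) e1 by simp
        have "\<not> is_leaf (Node ds)" using False by simp
        then have "xs @ [Node ds] \<in> TS h (Suc L) (k - 1)" using P e1 k unfolding TSsnoc by auto
        then have "xs @ [Node ds] \<in> A3" using k unfolding A3_def by simp
        moreover have "ts = f3 (xs @ [Node ds])" unfolding f3_def x t cs c by simp
        ultimately show ?thesis by blast
      next
        case nl: False
        have e1: "young_leaves t = young_leaves (Node ds) + young_leaves c"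
          using y nl by simp
        have "\<not> is_leaf (Node ds)" using False by simp
        then have "(xs @ [Node ds]) @ [c] \<in> A4" using P e e1 nl unfolding A4_def TSsnoc by auto
        moreover have "ts = f4 ((xs @ [Node ds]) @ [c])" unfolding f4_def x t cs by simp
        ultimately show ?thesis by blast
      qed
    qed
  qed
  have eq: "S = f1 ` A1 \<union> f2 ` A2 \<union> f3 ` A3 \<union> f4 ` A4"
    using cover i1 i2 i3 i4 by blast
  have inj1: "inj_on f1 A1" unfolding f1_def by (rule inj_onI) simp
  have inj2: "inj_on f2 A2"
  proof (rule inj_onI)
    fix x y assume xy: "x \<in> A2" "y \<in> A2" "f2 x = f2 y"
    obtain xs a where x: "x = xs @ [a]" using snoc[of x] xy(1) unfolding A2_def by blast
    obtain ys b where y: "y = ys @ [b]" using snoc[of y] xy(2) unfolding A2_def by blast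
    show "x = y" using xy(3) unfolding x y f2_def by simp
  qed
  have inj3: "inj_on f3 A3"
  proof (rule inj_onI)
    fix x y assume xy: "x \<in> A3" "y \<in> A3" "f3 x = f3 y"
    then have k: "k \<noteq> 0" unfolding A3_def by (cases "k = 0") auto
    have "x \<in> TS h (Suc L) (k - 1)" "y \<in> TS h (Suc L) (k - 1)" using xy k unfolding A3_def by simp_all
    then obtain xs a ys b where x: "x = xs @ [a]" and y: "y = ys @ [b]" using snoc by meson
    have "xs = ys" "kids a = kids b" using xy(3) unfolding x y f3_def by auto
    then show "x = y" unfolding x y by (metis nodekids)
  qed
  have inj4: "inj_on f4 A4"
  proof (rule inj_onI)
    fix x y assume xy: "x \<in> A4" "y \<in> A4" "f4 x = f4 y"
    have "length x = Suc (Suc h)" "length y = Suc (Suc h)" using xy unfolding A4_def TS_def by auto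
    then obtain xs a c ys b d where x: "x = xs @ [a, c]" and y: "y = ys @ [b, d]"
      by (cases x rule: rev_cases; cases "butlast x" rule: rev_cases;
          cases y rule: rev_cases; cases "butlast y" rule: rev_cases) auto
    have "xs = ys" "kids a = kids b" "c = d" using xy(3) unfolding x y f4_def by auto
    then show "x = y" unfolding x y by (metis nodekids)
  qed
  have fin: "finite A1" "finite A2" "finite A3" "finite A4"
    unfolding A1_def A2_def A3_def A4_def by (auto simp: finite_TS)
  have d: "f1 ` A1 \<inter> f2 ` A2 = {}" "(f1 ` A1 \<union> f2 ` A2) \<inter> f3 ` A3 = {}"
    "(f1 ` A1 \<union> f2 ` A2 \<union> f3 ` A3) \<inter> f4 ` A4 = {}"
  proof -
    have c: "\<forall>z\<in>f1 ` A1. cls (last z) = 1" "\<forall>z\<in>f2 ` A2. cls (last z) = 2"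
      "\<forall>z\<in>f3 ` A3. cls (last z) = 3" "\<forall>z\<in>f4 ` A4. cls (last z) = 4"
      using i1 i2 i3 i4 by auto
    show "f1 ` A1 \<inter> f2 ` A2 = {}" using c(1,2) by fastforce
    show "(f1 ` A1 \<union> f2 ` A2) \<inter> f3 ` A3 = {}" using c(1,2,3) by fastforce
    show "(f1 ` A1 \<union> f2 ` A2 \<union> f3 ` A3) \<inter> f4 ` A4 = {}" using c by fastforce
  qed
  have "card S = card (f1 ` A1) + card (f2 ` A2) + card (f3 ` A3) + card (f4 ` A4)"
    unfolding eq using fin d by (simp add: card_Un_disjoint)
  also have "\<dots> = card A1 + card A2 + card A3 + card A4"
    using inj1 inj2 inj3 inj4 by (simp add: card_image)
  finally show ?thesis unfolding S_def A1_def A2_def A3_def A4_def by simp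
qed

lemma card_TS_Q: "card (TS h (Suc L) k) = Q L h k"
proof (induction L arbitrary: h k)
  case 0
  then show ?case by (simp add: TS_1)
next
  case (Suc L)
  then show ?case by (simp add: card_TS_Suc)
qed


theorem mainTheorem4:
  fixes n k :: nat
  assumes "1 \<le> n" and "k \<le> n - 1"
  shows "card {t. edges t = n \<and> young_leaves t = k}
           = (n - 1 choose k) * motzkin (n - k - 1)"
proof -
  obtain L where n: "n = Suc L" using assms(1) by (cases n) auto
  have leaf: "is_leaf t \<Longrightarrow> edges t = 0" for t by (cases t) auto
  have img: "(\<lambda>t. [t]) ` {t. edges t = n \<and> young_leaves t = k} = TS 0 n k"
  proof (rule set_eqI)
    fix ts
    show "ts \<in> (\<lambda>t. [t]) ` {t. edges t = n \<and> young_leaves t = k} \<longleftrightarrow> ts \<in> TS 0 n k"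
      unfolding TS_def using leaf n by (auto simp: length_Suc_conv)
  qed
  have "card {t. edges t = n \<and> young_leaves t = k} = card (TS 0 n k)"
    unfolding img[symmetric] by (rule card_image[symmetric]) (simp add: inj_on_def)
  also have "\<dots> = Q L 0 k" unfolding n by (rule card_TS_Q)
  also have "\<dots> = (L choose k) * motzkin (L - k)" by (simp add: Q_closed Rm_motzkin)
  finally show ?thesis using n by simp
qed

end
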